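(* Suppose that OnlinePacker (described in the context) has produced a packing of n horizontal parallelograms of height 1 and width at most 1 in which there are no near-empty boxes. Then the density of the pieces in the occupied part of the strip is at least Ω(n^{1-log 3}), where log is base 2.
   Context: Setting: online translational strip packing. The strip is a horizontal strip of height 1, bounded on the left by a vertical segment and unbounded to the right. Pieces arrive one at a time, each must be placed by a translation only, interior-disjoint from previously placed pieces, before the next piece is revealed. The occupied part of the strip is the part from its left end to the vertical line through the rightmost point of a placed piece; density is total piece area divided by the area of the occupied part. Here all pieces are horizontal parallelograms (parallelograms with a pair of horizontal edges) of height 1 and width at most 1. Box types: these form an infinite ternary tree. The root, the basic box type, is a 2 x 1 rectangle. A d-dimensional box type is a vector [x_1,...,x_d] in {-1,0,+1}^d and is a horizontal parallelogram of height 1. Given type T with bottom edge b and top edge t, split b into three equal consecutive segments b_{-1}, b_0, b_{+1} and t likewise into t_{-1}, t_0, t_{+1}; the child type T ⊕ [x_{d+1}] is the parallelogram spanned by b_0 and t_{x_{d+1}}. Thus a d-dimensional type has base edges of length 2·3^{-d} (area 2·3^{-d}). A box type T matches a piece P if P can be packed into T and area(T) ≤ 6·area(P). A type is suitable for P if it is an ancestor (including itself) of a type matching P. Algorithm OnlinePacker: each allocated box of type T contains either a single piece that T matches, or one, two or three boxes whose types are children of T. When a piece P arrives: if there is an allocated box B_1 whose type T_1 is suitable for P (with T_1,...,T_k the tree path from T_1 to a type T_k matching P) and B_1 has room for one more box of type T_2, choose such B_1 of maximum dimension; then for i = 1,...,k-1 allocate in B_i a new box B_{i+1} of type T_{i+1},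 as far left in B_i as possible, and place P in B_k. Otherwise allocate a new basic box as far left in the strip as possible, call it B_1, and proceed the same way. A d-dimensional box is near-empty if exactly one (d+1)-dimensional box is allocated in it. *)

theory Defs
  imports "HOL-Analysis.Analysis"
begin

text \<open>The strip is [0,oo) x [0,1] in coordinates (u,y).  A horizontal parallelogram
of height 1 whose bottom edge is [x, x+w] (at y=0) and whose top edge is
[x+s, x+s+w] (at y=1).  Its horizontal edge length is w, its skew is s, its area
is w and its width (horizontal extent) is w + |s|.\<close>

definition para :: "real \<Rightarrow> real \<Rightarrow> real \<Rightarrow> (real \<times> real) set" where
  "para x w s = {(u, y). 0 \<le> y \<and> y \<le> 1 \<and> x + s * y \<le> u \<and> u \<le> x + s * y + w}"

definition piece_ok :: "real \<times> real \<Rightarrow> bool" where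
  "piece_ok P = (0 < fst P \<and> fst P + \<bar>snd P\<bar> \<le> 1)"

text \<open>A box type is a list [x_1,...,x_d] over {-1,0,1}.  Its geometry (relative to
the basic box [0,2] x [0,1]) is the triple (b, t, L): bottom edge [b, b+L],
top edge [t, t+L].  The child T @ [x] is spanned by the middle third of the
bottom edge and the x-th third of the top edge.\<close>

definition valid_type :: "int list \<Rightarrow> bool" where
  "valid_type T = (set T \<subseteq> {-1, 0, 1})"

definition child_geom :: "real \<times> real \<times> real \<Rightarrow> int \<Rightarrow> real \<times> real \<times> real" where
  "child_geom g x = (case g of (b, t, L) \<Rightarrow> (b + L / 3, t + (of_int x + 1) * L / 3, L / 3))"

definition tgeom :: "int list \<Rightarrow> real \<times> real \<times> real" where
  "tgeom T = foldl child_geom (0, 0, 2) T"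

text \<open>Base edge length of a type (= its area, since the height is 1).\<close>
definition tlen :: "int list \<Rightarrow> real" where
  "tlen T = snd (snd (tgeom T))"

definition box_set :: "int list \<Rightarrow> real \<Rightarrow> (real \<times> real) set" where
  "box_set T p = (case tgeom T of (b, t, L) \<Rightarrow>
     {(u, y). 0 \<le> y \<and> y \<le> 1 \<and> p + b + (t - b) * y \<le> u \<and> u \<le> p + b + (t - b) * y + L})"

definition matches :: "int list \<Rightarrow> real \<Rightarrow> real \<Rightarrow> bool" where
  "matches T w s = ((\<exists>v. para v w s \<subseteq> box_set T 0) \<and> tlen T \<le> 6 * w)"

text \<open>Boxes: (type, horizontal translation, parent box index; None for basic boxes).
Pieces: (w, s, horizontal position x, index of the box containing it); the piece
occupies para x w s.\<close>

record pstate =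
  bxs :: "(int list \<times> real \<times> nat option) list"
  pcs :: "(real \<times> real \<times> real \<times> nat) list"

definition init_state :: pstate where
  "init_state = \<lparr>bxs = [], pcs = []\<rparr>"

definition bt :: "pstate \<Rightarrow> nat \<Rightarrow> int list" where
  "bt S i = fst (bxs S ! i)"
definition bpos :: "pstate \<Rightarrow> nat \<Rightarrow> real" where
  "bpos S i = fst (snd (bxs S ! i))"
definition bpar :: "pstate \<Rightarrow> nat \<Rightarrow> nat option" where
  "bpar S i = snd (snd (bxs S ! i))"

definition bset :: "pstate \<Rightarrow> nat \<Rightarrow> (real \<times> real) set" where
  "bset S i = box_set (bt S i) (bpos S i)"

definition children :: "pstate \<Rightarrow> nat \<Rightarrow> nat set" where
  "children S i = {j. j < length (bxs S) \<and> bpar S j = Some i}"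

definition has_piece :: "pstate \<Rightarrow> nat \<Rightarrow> bool" where
  "has_piece S i = (\<exists>P \<in> set (pcs S). snd (snd (snd P)) = i)"

definition add_box :: "pstate \<Rightarrow> int list \<Rightarrow> real \<Rightarrow> nat option \<Rightarrow> pstate" where
  "add_box S T p par = S\<lparr>bxs := bxs S @ [(T, p, par)]\<rparr>"

definition add_piece :: "pstate \<Rightarrow> real \<Rightarrow> real \<Rightarrow> real \<Rightarrow> nat \<Rightarrow> pstate" where
  "add_piece S w s x i = S\<lparr>pcs := pcs S @ [(w, s, x, i)]\<rparr>"

definition free_pos :: "pstate \<Rightarrow> nat \<Rightarrow> int list \<Rightarrow> real set" where
  "free_pos S i U = {p. \<not> has_piece S i \<and> box_set U p \<subseteq> bset S i \<and>
      (\<forall>j \<in> children S i. interior (box_set U p) \<inter> interior (bset S j) = {})}"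

definition free_strip :: "pstate \<Rightarrow> real set" where
  "free_strip S = {p. 0 \<le> p \<and>
      (\<forall>j < length (bxs S). bpar S j = None \<longrightarrow> interior (box_set [] p) \<inter> interior (bset S j) = {})}"

definition leftmost :: "real set \<Rightarrow> real \<Rightarrow> bool" where
  "leftmost A p = (p \<in> A \<and> (\<forall>q \<in> A. p \<le> q))"

text \<open>descend S i V S' k: starting in box i, allocate successively boxes of the types
bt S i @ [v1], bt S i @ [v1,v2], ..., each as far left as possible in the previous one;
k is the index of the last box.\<close>
inductive descend :: "pstate \<Rightarrow> nat \<Rightarrow> int list \<Rightarrow> pstate \<Rightarrow> nat \<Rightarrow> bool" where
  descend_Nil: "descend S i [] S i"
| descend_Cons: "leftmost (free_pos S i (bt S i @ [x])) p \<Longrightarrow>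
     descend (add_box S (bt S i @ [x]) p (Some i)) (length (bxs S)) xs S' k \<Longrightarrow>
     descend S i (x # xs) S' k"

text \<open>Box i can serve as B_1 for the piece (w,s) along the path V (V nonempty,
bt S i @ V matches, and box i has room for a box of type T_2 = bt S i @ [hd V]).\<close>
definition candidate :: "pstate \<Rightarrow> real \<Rightarrow> real \<Rightarrow> nat \<Rightarrow> int list \<Rightarrow> bool" where
  "candidate S w s i V = (i < length (bxs S) \<and> V \<noteq> [] \<and> valid_type (bt S i @ V) \<and>
      matches (bt S i @ V) w s \<and> free_pos S i (bt S i @ [hd V]) \<noteq> {})"

text \<open>One step of OnlinePacker (all unspecified choices are left nondeterministic).\<close>
definition step :: "pstate \<Rightarrow> real \<times> real \<Rightarrow> pstate \<Rightarrow> bool" where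
  "step S P S' = (case P of (w, s) \<Rightarrow>
     (\<exists>i V S1 k x. candidate S w s i V \<and>
        (\<forall>j U. candidate S w s j U \<longrightarrow> length (bt S j) \<le> length (bt S i)) \<and>
        descend S i V S1 k \<and> para x w s \<subseteq> bset S1 k \<and> S' = add_piece S1 w s x k)
   \<or> ((\<nexists>j U. candidate S w s j U) \<and>
      (\<exists>p V S1 k x. leftmost (free_strip S) p \<and> valid_type V \<and> matches V w s \<and>
        descend (add_box S [] p None) (length (bxs S)) V S1 k \<and>
        para x w s \<subseteq> bset S1 k \<and> S' = add_piece S1 w s x k)))"

inductive run :: "(real \<times> real) list \<Rightarrow> pstate \<Rightarrow> bool" where
  run_Nil: "run [] init_state"
| run_snoc: "run ps S \<Longrightarrow> step S P S' \<Longrightarrow> run (ps @ [P]) S'"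

definition no_near_empty :: "pstate \<Rightarrow> bool" where
  "no_near_empty S = (\<forall>i < length (bxs S). card (children S i) \<noteq> 1)"

definition piece_area :: "pstate \<Rightarrow> real" where
  "piece_area S = (\<Sum>P \<leftarrow> pcs S. fst P)"

definition occupied_length :: "pstate \<Rightarrow> real" where
  "occupied_length S = Max (set (map (\<lambda>(w, s, x, i). x + w + max 0 s) (pcs S)))"

definition density :: "pstate \<Rightarrow> real" where
  "density S = piece_area S / occupied_length S"

end

theory Submission
  imports Defs
begin


lemma tgeom_len_aux: "snd (snd (foldl child_geom g T)) = snd (snd g) / 3 ^ length T"
proof (induction T arbitrary: g)
  case Nil then show ?case by simp
next
  case (Cons x T)
  obtain b t L where g: "g = (b, t, L)" by (cases g) auto
  show ?case using Cons[of "child_geom g x"] by (simp add: g child_geom_def)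
qed

lemma tlen_eq: "tlen T = 2 * (1/3) ^ length T"
  by (simp add: tlen_def tgeom_def tgeom_len_aux power_one_over)

lemma box_set_Nil: "box_set [] p = {p..p+2} \<times> {0..1}"
  by (auto simp: box_set_def tgeom_def)

lemma interior_box_Nil: "interior (box_set [] p) = {p<..<p+2} \<times> {0<..<1}"
  by (simp add: box_set_Nil interior_Times)

definition nb :: "pstate \<Rightarrow> nat" where
  "nb S = length (filter (\<lambda>b. snd (snd b) = None) (bxs S))"

definition binv :: "pstate \<Rightarrow> bool" where
  "binv S = (\<forall>j<length (bxs S). (bpar S j = None \<longrightarrow> bt S j = []) \<and>
     (\<forall>i. bpar S j = Some i \<longrightarrow> i < j \<and> (\<exists>x. bt S j = bt S i @ [x])) \<and>
     bset S j \<subseteq> {(u,y). 0 \<le> u \<and> u \<le> 2 * real (nb S)})"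

definition pinv :: "pstate \<Rightarrow> bool" where
  "pinv S = (\<forall>(w, s, x, k)\<in>set (pcs S). k < length (bxs S) \<and> para x w s \<subseteq> bset S k \<and>
      tlen (bt S k) \<le> 6 * w)"

definition linv :: "pstate \<Rightarrow> bool" where
  "linv S = (\<forall>j<length (bxs S). has_piece S j \<or> (\<exists>j'<length (bxs S). bpar S j' = Some j))"

lemma prefix_eqs:
  assumes "bxs S' = bxs S @ new" "j < length (bxs S)"
  shows "bt S' j = bt S j" "bpar S' j = bpar S j" "bpos S' j = bpos S j" "bset S' j = bset S j"
  using assms by (auto simp: bt_def bpar_def bpos_def bset_def nth_append)

lemma add_box_simps:
  "bxs (add_box S T p par) = bxs S @ [(T, p, par)]"
  "pcs (add_box S T p par) = pcs S"
  "bt (add_box S T p par) (length (bxs S)) = T"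
  "bpar (add_box S T p par) (length (bxs S)) = par"
  "bset (add_box S T p par) (length (bxs S)) = box_set T p"
  "nb (add_box S T p par) = nb S + (if par = None then 1 else 0)"
  by (auto simp: add_box_def bt_def bpar_def bpos_def bset_def nb_def)

lemma binv_add_child:
  assumes "binv S" "i < length (bxs S)" "box_set (bt S i @ [x]) p \<subseteq> bset S i"
  shows "binv (add_box S (bt S i @ [x]) p (Some i))"
proof -
  let ?S0 = "add_box S (bt S i @ [x]) p (Some i)"
  have pre: "bxs ?S0 = bxs S @ [(bt S i @ [x], p, Some i)]" by (simp add: add_box_simps)
  have nbe: "nb ?S0 = nb S" by (simp add: add_box_simps)
  show ?thesis unfolding binv_def
  proof (intro allI impI)
    fix j assume j: "j < length (bxs ?S0)"
    show "(bpar ?S0 j = None \<longrightarrow> bt ?S0 j = []) \<and>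
     (\<forall>i'. bpar ?S0 j = Some i' \<longrightarrow> i' < j \<and> (\<exists>x. bt ?S0 j = bt ?S0 i' @ [x])) \<and>
     bset ?S0 j \<subseteq> {(u,y). 0 \<le> u \<and> u \<le> 2 * real (nb ?S0)}"
    proof (cases "j < length (bxs S)")
      case True
      have h: "(bpar S j = None \<longrightarrow> bt S j = []) \<and>
        (\<forall>i'. bpar S j = Some i' \<longrightarrow> i' < j \<and> (\<exists>x. bt S j = bt S i' @ [x])) \<and>
        bset S j \<subseteq> {(u,y). 0 \<le> u \<and> u \<le> 2 * real (nb S)}"
        using assms(1) True unfolding binv_def by blast
      have e: "bt ?S0 j = bt S j" "bpar ?S0 j = bpar S j" "bset ?S0 j = bset S j"
        using prefix_eqs[OF pre True] by auto
      have e2: "\<And>i'. i' < j \<Longrightarrow> bt ?S0 i' = bt S i'"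
        using prefix_eqs(1)[OF pre] True by simp
      show ?thesis unfolding e nbe using h e2 by auto
    next
      case False
      then have jm: "j = length (bxs S)" using j pre by simp
      have "bset ?S0 j \<subseteq> bset S i" using assms(3) jm by (simp add: add_box_simps)
      also have "\<dots> \<subseteq> {(u,y). 0 \<le> u \<and> u \<le> 2 * real (nb ?S0)}"
        using assms(1,2) nbe unfolding binv_def by auto
      finally show ?thesis using jm assms(2) prefix_eqs[OF pre assms(2)]
        by (simp add: add_box_simps)
    qed
  qed
qed


lemma descend_props:
  assumes "descend S i V S' k" "i < length (bxs S)" "binv S"
  shows "binv S' \<and> pcs S' = pcs S \<and> (\<exists>new. bxs S' = bxs S @ new) \<and> k < length (bxs S') \<and>
    bt S' k = bt S i @ V \<and> nb S' = nb S \<and> (V = [] \<longrightarrow> k = i \<and> S' = S) \<and>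
    (V \<noteq> [] \<longrightarrow> length (bxs S) < length (bxs S') \<and> bpar S' (length (bxs S)) = Some i) \<and>
    (\<forall>j. length (bxs S) \<le> j \<and> j < length (bxs S') \<and> j \<noteq> k \<longrightarrow>
        (\<exists>j'<length (bxs S'). bpar S' j' = Some j))"
  using assms
proof (induction rule: descend.induct)
  case (descend_Nil S i)
  then show ?case by auto
next
  case (descend_Cons S i x p xs S' k)
  let ?S0 = "add_box S (bt S i @ [x]) p (Some i)"
  let ?m = "length (bxs S)"
  have pre: "bxs ?S0 = bxs S @ [(bt S i @ [x], p, Some i)]" by (simp add: add_box_simps)
  have sub: "box_set (bt S i @ [x]) p \<subseteq> bset S i"
    using descend_Cons.hyps(1) by (simp add: leftmost_def free_pos_def)
  have b0: "binv ?S0" using binv_add_child[OF descend_Cons.prems(2) descend_Cons.prems(1) sub] .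
  have mlt: "?m < length (bxs ?S0)" using pre by simp
  have IH: "binv S' \<and> pcs S' = pcs ?S0 \<and> (\<exists>new. bxs S' = bxs ?S0 @ new) \<and> k < length (bxs S') \<and>
    bt S' k = bt ?S0 ?m @ xs \<and> nb S' = nb ?S0 \<and> (xs = [] \<longrightarrow> k = ?m \<and> S' = ?S0) \<and>
    (xs \<noteq> [] \<longrightarrow> length (bxs ?S0) < length (bxs S') \<and> bpar S' (length (bxs ?S0)) = Some ?m) \<and>
    (\<forall>j. length (bxs ?S0) \<le> j \<and> j < length (bxs S') \<and> j \<noteq> k \<longrightarrow>
        (\<exists>j'<length (bxs S'). bpar S' j' = Some j))"
    using descend_Cons.IH[OF mlt b0] by simp
  then obtain new where new: "bxs S' = bxs ?S0 @ new" by blast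
  have new2: "bxs S' = bxs S @ ((bt S i @ [x], p, Some i) # new)" using new pre by simp
  have bparm: "bpar S' ?m = Some i"
    using prefix_eqs(2)[OF new mlt] by (simp add: add_box_simps)
  have lt: "?m < length (bxs S')" using new mlt by simp
  have "\<forall>j. ?m \<le> j \<and> j < length (bxs S') \<and> j \<noteq> k \<longrightarrow> (\<exists>j'<length (bxs S'). bpar S' j' = Some j)"
  proof (intro allI impI)
    fix j assume j: "?m \<le> j \<and> j < length (bxs S') \<and> j \<noteq> k"
    show "\<exists>j'<length (bxs S'). bpar S' j' = Some j"
    proof (cases "j = ?m")
      case True
      then have "xs \<noteq> []" using IH j by auto
      then show ?thesis using IH True pre by auto
    next
      case False
      then show ?thesis using IH j pre by auto
    qed
  qed
  then show ?case using IH new2 bparm lt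
    by (simp add: add_box_simps)
qed


lemma binv_add_basic:
  assumes "binv S" "leftmost (free_strip S) p"
  shows "binv (add_box S [] p None)"
proof -
  let ?S0 = "add_box S [] p None"
  let ?q = "2 * real (nb S)"
  have pre: "bxs ?S0 = bxs S @ [([], p, None)]" by (simp add: add_box_simps)
  have nbe: "nb ?S0 = nb S + 1" by (simp add: add_box_simps)
  have qfree: "?q \<in> free_strip S"
    unfolding free_strip_def
  proof (intro CollectI conjI allI impI)
    show "0 \<le> ?q" by simp
    fix j assume j: "j < length (bxs S)" "bpar S j = None"
    have bj: "bt S j = []" "bset S j \<subseteq> {(u,y). 0 \<le> u \<and> u \<le> ?q}"
      using assms(1) j unfolding binv_def by auto
    have "(bpos S j + 2, 0) \<in> bset S j" using bj(1) by (simp add: bset_def box_set_Nil)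
    then have le: "bpos S j + 2 \<le> ?q" using bj(2) by auto
    show "interior (box_set [] ?q) \<inter> interior (bset S j) = {}"
      using le by (auto simp: bset_def bj(1) interior_box_Nil)
  qed
  have p: "0 \<le> p" "p \<le> ?q" using assms(2) qfree unfolding leftmost_def free_strip_def by auto
  show ?thesis unfolding binv_def
  proof (intro allI impI)
    fix j assume j: "j < length (bxs ?S0)"
    show "(bpar ?S0 j = None \<longrightarrow> bt ?S0 j = []) \<and>
     (\<forall>i'. bpar ?S0 j = Some i' \<longrightarrow> i' < j \<and> (\<exists>x. bt ?S0 j = bt ?S0 i' @ [x])) \<and>
     bset ?S0 j \<subseteq> {(u,y). 0 \<le> u \<and> u \<le> 2 * real (nb ?S0)}"
    proof (cases "j < length (bxs S)")
      case True
      have h: "(bpar S j = None \<longrightarrow> bt S j = []) \<and>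
        (\<forall>i'. bpar S j = Some i' \<longrightarrow> i' < j \<and> (\<exists>x. bt S j = bt S i' @ [x])) \<and>
        bset S j \<subseteq> {(u,y). 0 \<le> u \<and> u \<le> 2 * real (nb S)}"
        using assms(1) True unfolding binv_def by blast
      have e: "bt ?S0 j = bt S j" "bpar ?S0 j = bpar S j" "bset ?S0 j = bset S j"
        using prefix_eqs[OF pre True] by auto
      have e2: "\<And>i'. i' < j \<Longrightarrow> bt ?S0 i' = bt S i'"
        using prefix_eqs(1)[OF pre] True by simp
      show ?thesis unfolding e nbe using h e2 by auto
    next
      case False
      then have jm: "j = length (bxs S)" using j pre by simp
      show ?thesis using jm p by (auto simp: add_box_simps box_set_Nil)
    qed
  qed
qed

lemma add_piece_simps:
  "bxs (add_piece S w s x k) = bxs S"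
  "pcs (add_piece S w s x k) = pcs S @ [(w, s, x, k)]"
  "bt (add_piece S w s x k) = bt S"
  "bpar (add_piece S w s x k) = bpar S"
  "bset (add_piece S w s x k) = bset S"
  "nb (add_piece S w s x k) = nb S"
  by (auto simp: add_piece_def bt_def bpar_def bpos_def bset_def nb_def fun_eq_iff)

lemma finish:
  assumes "binv S1" "pinv S" "linv S" "bxs S1 = bxs S @ new" "pcs S1 = pcs S"
    "k < length (bxs S1)" "tlen (bt S1 k) \<le> 6 * w" "para x w s \<subseteq> bset S1 k"
    "\<forall>j. length (bxs S) \<le> j \<and> j < length (bxs S1) \<and> j \<noteq> k \<longrightarrow>
        (\<exists>j'<length (bxs S1). bpar S1 j' = Some j)"
  shows "binv (add_piece S1 w s x k) \<and> pinv (add_piece S1 w s x k) \<and> linv (add_piece S1 w s x k)"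
proof -
  let ?S = "add_piece S1 w s x k"
  have b: "binv ?S" using assms(1) unfolding binv_def add_piece_simps .
  have p: "pinv ?S" unfolding pinv_def
  proof
    fix P assume P: "P \<in> set (pcs ?S)"
    obtain w' s' x' k' where Pe: "P = (w', s', x', k')" by (cases P) auto
    show "case P of (w, s, x, k) \<Rightarrow> k < length (bxs ?S) \<and> para x w s \<subseteq> bset ?S k \<and> tlen (bt ?S k) \<le> 6 * w"
    proof (cases "P \<in> set (pcs S)")
      case True
      then have h: "k' < length (bxs S) \<and> para x' w' s' \<subseteq> bset S k' \<and> tlen (bt S k') \<le> 6 * w'"
        using assms(2) Pe unfolding pinv_def by auto
      then show ?thesis using Pe prefix_eqs[OF assms(4)] assms(4)
        by (auto simp: add_piece_simps)
    next
      case False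
      then have "P = (w, s, x, k)" using P assms(5) by (auto simp: add_piece_simps)
      then show ?thesis using assms(6,7,8) by (simp add: add_piece_simps)
    qed
  qed
  have l: "linv ?S" unfolding linv_def add_piece_simps
  proof (intro allI impI)
    fix j assume j: "j < length (bxs S1)"
    show "has_piece ?S j \<or> (\<exists>j'<length (bxs S1). bpar S1 j' = Some j)"
    proof (cases "j < length (bxs S)")
      case True
      then have "has_piece S j \<or> (\<exists>j'<length (bxs S). bpar S j' = Some j)"
        using assms(3) unfolding linv_def by blast
      then show ?thesis
      proof
        assume "has_piece S j"
        then show ?thesis using assms(5) by (auto simp: has_piece_def add_piece_simps)
      next
        assume "\<exists>j'<length (bxs S). bpar S j' = Some j"
        then obtain j' where "j' < length (bxs S)" "bpar S j' = Some j" by blast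
        then show ?thesis using prefix_eqs(2)[OF assms(4)] assms(4) by (metis length_append trans_less_add1)
      qed
    next
      case False
      show ?thesis
      proof (cases "j = k")
        case True then show ?thesis by (simp add: has_piece_def add_piece_simps)
      next
        case False2: False
        then show ?thesis using assms(9) j False by auto
      qed
    qed
  qed
  show ?thesis using b p l by blast
qed

lemma run_inv:
  assumes "run ps S"
  shows "binv S \<and> pinv S \<and> linv S \<and> map (\<lambda>(w, s, x, k). (w, s)) (pcs S) = ps"
  using assms
proof (induction rule: run.induct)
  case run_Nil
  then show ?case by (simp add: init_state_def binv_def pinv_def linv_def)
next
  case (run_snoc ps S P S')
  obtain w s where Pe: "P = (w, s)" by (cases P) auto
  have IH: "binv S" "pinv S" "linv S" "map (\<lambda>(w, s, x, k). (w, s)) (pcs S) = ps"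
    using run_snoc.IH by auto
  from run_snoc.hyps(2) Pe consider
    (A) i V S1 k x where "candidate S w s i V" "descend S i V S1 k" "para x w s \<subseteq> bset S1 k"
        "S' = add_piece S1 w s x k"
  | (B) p V S1 k x where "leftmost (free_strip S) p" "valid_type V" "matches V w s"
        "descend (add_box S [] p None) (length (bxs S)) V S1 k" "para x w s \<subseteq> bset S1 k"
        "S' = add_piece S1 w s x k"
    unfolding step_def by auto
  then show ?case
  proof cases
    case A
    have c: "i < length (bxs S)" "V \<noteq> []" "matches (bt S i @ V) w s"
      using A(1) unfolding candidate_def by auto
    note D = descend_props[OF A(2) c(1) IH(1)]
    then obtain new where new: "bxs S1 = bxs S @ new" by blast
    have t: "tlen (bt S1 k) \<le> 6 * w" using D c(3) unfolding matches_def by simp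
    have "binv S' \<and> pinv S' \<and> linv S'"
      unfolding A(4) using finish[OF _ IH(2) IH(3) new _ _ t A(3)] D by blast
    moreover have "map (\<lambda>(w, s, x, k). (w, s)) (pcs S') = ps @ [P]"
      using A(4) D IH(4) Pe by (simp add: add_piece_simps)
    ultimately show ?thesis by blast
  next
    case B
    let ?S0 = "add_box S [] p None"
    let ?m = "length (bxs S)"
    have pre: "bxs ?S0 = bxs S @ [([], p, None)]" by (simp add: add_box_simps)
    have b0: "binv ?S0" using binv_add_basic[OF IH(1) B(1)] .
    have mlt: "?m < length (bxs ?S0)" using pre by simp
    note D = descend_props[OF B(4) mlt b0]
    then obtain new where new0: "bxs S1 = bxs ?S0 @ new" by blast
    have new: "bxs S1 = bxs S @ (([], p, None) # new)" using new0 pre by simp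
    have t: "tlen (bt S1 k) \<le> 6 * w" using D B(3) unfolding matches_def by (simp add: add_box_simps)
    have pc: "pcs S1 = pcs S" using D by (simp add: add_box_simps)
    have ch: "\<forall>j. ?m \<le> j \<and> j < length (bxs S1) \<and> j \<noteq> k \<longrightarrow> (\<exists>j'<length (bxs S1). bpar S1 j' = Some j)"
    proof (intro allI impI)
      fix j assume j: "?m \<le> j \<and> j < length (bxs S1) \<and> j \<noteq> k"
      show "\<exists>j'<length (bxs S1). bpar S1 j' = Some j"
      proof (cases "j = ?m")
        case True
        then have "V \<noteq> []" using D j by auto
        then show ?thesis using D True pre by auto
      next
        case False
        then show ?thesis using D j pre by auto
      qed
    qed
    have kl: "k < length (bxs S1)" using D by blast
    have "binv S' \<and> pinv S' \<and> linv S'"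
      unfolding B(6) using finish[OF _ IH(2) IH(3) new pc kl t B(5) ch] D by blast
    moreover have "map (\<lambda>(w, s, x, k). (w, s)) (pcs S') = ps @ [P]"
      using B(6) pc IH(4) Pe by (simp add: add_piece_simps)
    ultimately show ?thesis by blast
  qed
qed



lemma binvD:
  assumes "binv S" "j < length (bxs S)"
  shows "bpar S j = None \<Longrightarrow> bt S j = []"
    "bpar S j = Some i \<Longrightarrow> i < j"
    "bpar S j = Some i \<Longrightarrow> \<exists>x. bt S j = bt S i @ [x]"
  using assms unfolding binv_def by blast+

lemma nb_card: "nb S = card {j. j < length (bxs S) \<and> bpar S j = None}"
  unfolding nb_def bpar_def by (simp add: length_filter_conv_card)

lemma leaf_sum:
  assumes "binv S" "no_near_empty S"
  shows "real (nb S) \<le> (\<Sum>j\<in>{j. j < length (bxs S) \<and> \<not> (\<exists>j'<length (bxs S). bpar S j' = Some j)}.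
     ((1/2::real) ^ length (bt S j)))"
proof -
  define M where "M = length (bxs S)"
  define f where "f j = (1/2::real) ^ length (bt S j)" for j
  define J where "J = {..<M}"
  define Bs where "Bs = {j\<in>J. bpar S j = None}"
  define Nb where "Nb = {j\<in>J. bpar S j \<noteq> None}"
  define In where "In = {i\<in>J. \<exists>j\<in>J. bpar S j = Some i}"
  define Lv where "Lv = J - In"
  have fin: "finite J" "finite Bs" "finite Nb" "finite In" "finite Lv"
    unfolding J_def Bs_def Nb_def In_def Lv_def by auto
  have nbB: "nb S = card Bs" unfolding nb_card Bs_def J_def M_def by simp
  have sB: "sum f Bs = real (card Bs)"
  proof -
    have "\<And>j. j \<in> Bs \<Longrightarrow> f j = 1"
      using binvD(1)[OF assms(1)] unfolding Bs_def J_def M_def f_def by simp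
    then show ?thesis by simp
  qed
  have grp: "sum f Nb = (\<Sum>i\<in>In. sum f {j\<in>Nb. the (bpar S j) = i})"
  proof (rule sum.group[symmetric])
    show "finite Nb" "finite In" by (fact fin)+
    show "(\<lambda>j. the (bpar S j)) ` Nb \<subseteq> In"
    proof
      fix i assume "i \<in> (\<lambda>j. the (bpar S j)) ` Nb"
      then obtain j where j: "j \<in> Nb" "i = the (bpar S j)" by blast
      then obtain i' where i': "bpar S j = Some i'" unfolding Nb_def by auto
      have "j < M" using j(1) unfolding Nb_def J_def by simp
      then have "i' < j" using binvD(2)[OF assms(1) _ i'] unfolding M_def by simp
      then show "i \<in> In" using j i' unfolding In_def Nb_def J_def by auto
    qed
  qed
  have ge: "f i \<le> sum f {j\<in>Nb. the (bpar S j) = i}" if i: "i \<in> In" for i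
  proof -
    let ?C = "{j\<in>Nb. the (bpar S j) = i}"
    have Ceq: "?C = children S i" unfolding children_def Nb_def J_def M_def by auto
    obtain j0 where j0: "j0 \<in> J" "bpar S j0 = Some i" using i unfolding In_def by blast
    then have "j0 \<in> ?C" unfolding Nb_def by simp
    moreover have "finite ?C" using fin(3) by simp
    ultimately have "card ?C \<noteq> 0" by auto
    moreover have "card ?C \<noteq> 1" using assms(2) i unfolding Ceq no_near_empty_def In_def J_def M_def by auto
    ultimately have c2: "card ?C \<ge> 2" by linarith
    have fj: "f j = f i / 2" if j: "j \<in> ?C" for j
    proof -
      have "bpar S j = Some i" "j < M" using j unfolding Nb_def J_def by auto
      then obtain x where "bt S j = bt S i @ [x]" using binvD(3)[OF assms(1)] unfolding M_def by blast
      then show ?thesis unfolding f_def by simp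
    qed
    have "sum f ?C = sum (\<lambda>j. f i / 2) ?C" by (rule sum.cong) (simp_all add: fj)
    also have "\<dots> = real (card ?C) * (f i / 2)" by simp
    finally have "sum f ?C = real (card ?C) * (f i / 2)" .
    moreover have "f i \<ge> 0" unfolding f_def by simp
    moreover have "real (card ?C) \<ge> 2" using c2 by simp
    ultimately have "2 * (f i / 2) \<le> real (card ?C) * (f i / 2)" 
      by (intro mult_right_mono) auto
    then show ?thesis using \<open>sum f ?C = real (card ?C) * (f i / 2)\<close> by simp
  qed
  have NbIn: "sum f In \<le> sum f Nb" unfolding grp by (rule sum_mono) (rule ge)
  have J1: "sum f J = sum f Bs + sum f Nb"
  proof -
    have "J = Bs \<union> Nb" "Bs \<inter> Nb = {}" unfolding Bs_def Nb_def by auto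
    then show ?thesis using fin sum.union_disjoint by metis
  qed
  have J2: "sum f J = sum f In + sum f Lv"
  proof -
    have "J = In \<union> Lv" "In \<inter> Lv = {}" unfolding In_def Lv_def by auto
    then show ?thesis using fin sum.union_disjoint by metis
  qed
  have "real (nb S) \<le> sum f Lv" using nbB sB NbIn J1 J2 by linarith
  moreover have "Lv = {j. j < length (bxs S) \<and> \<not> (\<exists>j'<length (bxs S). bpar S j' = Some j)}"
    unfolding Lv_def In_def J_def M_def by auto
  ultimately show ?thesis unfolding f_def by simp
qed

lemma piece_sum:
  assumes "binv S" "no_near_empty S" "linv S"
  shows "real (nb S) \<le> (\<Sum>k<length (pcs S). (1/2::real) ^ length (bt S (snd (snd (snd (pcs S ! k))))))"
proof -
  let ?Lv = "{j. j < length (bxs S) \<and> \<not> (\<exists>j'<length (bxs S). bpar S j' = Some j)}"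
  let ?n = "length (pcs S)"
  let ?h = "\<lambda>k. (1/2::real) ^ length (bt S (snd (snd (snd (pcs S ! k)))))"
  define g where "g j = (SOME k. k < ?n \<and> snd (snd (snd (pcs S ! k))) = j)" for j
  have gp: "g j < ?n \<and> snd (snd (snd (pcs S ! g j))) = j" if j: "j \<in> ?Lv" for j
  proof -
    have "has_piece S j" using assms(3) j unfolding linv_def by blast
    then obtain P where "P \<in> set (pcs S)" "snd (snd (snd P)) = j" unfolding has_piece_def by blast
    then have "\<exists>k. k < ?n \<and> snd (snd (snd (pcs S ! k))) = j" by (metis in_set_conv_nth)
    then show ?thesis unfolding g_def by (rule someI_ex)
  qed
  have inj: "inj_on g ?Lv"
  proof (rule inj_onI)
    fix a b assume a: "a \<in> ?Lv" and b: "b \<in> ?Lv" and e: "g a = g b"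
    have "a = snd (snd (snd (pcs S ! g a)))" using conjunct2[OF gp[OF a]] by (rule sym)
    also have "\<dots> = snd (snd (snd (pcs S ! g b)))" by (simp only: e)
    also have "\<dots> = b" using gp[OF b] by (rule conjunct2)
    finally show "a = b" .
  qed
  have "real (nb S) \<le> (\<Sum>j\<in>?Lv. (1/2::real) ^ length (bt S j))" using leaf_sum[OF assms(1,2)] .
  also have "\<dots> = (\<Sum>j\<in>?Lv. ?h (g j))"
  proof (rule sum.cong)
    fix j assume "j \<in> ?Lv"
    then have "snd (snd (snd (pcs S ! g j))) = j" by (rule conjunct2[OF gp])
    then show "(1/2::real) ^ length (bt S j) = ?h (g j)" by simp
  qed simp
  also have "\<dots> = sum ?h (g ` ?Lv)" using sum.reindex[OF inj, of ?h] by simp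
  also have "\<dots> \<le> sum ?h {..<?n}"
  proof (rule sum_mono2)
    show "g ` ?Lv \<subseteq> {..<?n}" using gp by blast
  qed simp_all
  finally show ?thesis .
qed



lemma pow_id: "((1/2::real) ^ d) powr (log 2 3 - 1) = (2/3) ^ d"
proof -
  have pos: "(1/2::real) ^ d > 0" "((2/3)::real) ^ d > 0" by auto
  have "ln (((1/2::real) ^ d) powr (log 2 3 - 1)) = (log 2 3 - 1) * (real d * ln (1/2))"
    using pos by (simp add: ln_powr ln_realpow)
  also have "\<dots> = real d * (ln 2 - ln 3)"
    by (simp add: log_def ln_div field_simps)
  also have "\<dots> = ln ((2/3::real) ^ d)" by (simp add: ln_realpow ln_div)
  finally have L: "ln (((1/2::real) ^ d) powr (log 2 3 - 1)) = ln ((2/3::real) ^ d)" .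
  have A: "((1/2::real) ^ d) powr (log 2 3 - 1) > 0" by simp
  show ?thesis using ln_inj_iff[OF A pos(2)] L by blast
qed

lemma markov:
  fixes d :: "nat \<Rightarrow> nat" and n :: nat and B :: real
  assumes n: "n \<ge> 1" and B: "B \<ge> 1" and S: "B \<le> (\<Sum>k<n. (1/2::real) ^ d k)"
  shows "B * real n powr (1 - log 2 3) / 3 \<le> (\<Sum>k<n. (1/3::real) ^ d k)"
proof -
  define e where "e = log 2 3 - 1"
  have e0: "e > 0"
  proof -
    have "log 2 (2::real) < log 2 3" by simp
    then show ?thesis unfolding e_def by simp
  qed
  define \<tau> where "\<tau> = B / (2 * real n)"
  have tpos: "\<tau> > 0" unfolding \<tau>_def using n B by simp
  define K where "K = {k\<in>{..<n}. \<tau> \<le> (1/2::real) ^ d k}"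
  have split: "(\<Sum>k<n. (1/2::real) ^ d k) = sum (\<lambda>k. (1/2::real) ^ d k) K + sum (\<lambda>k. (1/2::real) ^ d k) ({..<n} - K)"
    unfolding K_def by (metis (no_types, lifting) finite_lessThan mem_Collect_eq subsetI sum.subset_diff add.commute)
  have "sum (\<lambda>k. (1/2::real) ^ d k) ({..<n} - K) \<le> sum (\<lambda>k. \<tau>) ({..<n} - K)"
    by (rule sum_mono) (auto simp: K_def)
  also have "\<dots> \<le> real n * \<tau>"
  proof -
    have "card ({..<n} - K) \<le> n" by (metis card_Diff_subset card_lessThan diff_le_self finite_lessThan finite_subset Diff_subset card_mono)
    then show ?thesis using tpos by (simp add: mult_right_mono)
  qed
  also have "\<dots> = B / 2" unfolding \<tau>_def using n by simp
  finally have sK: "B / 2 \<le> sum (\<lambda>k. (1/2::real) ^ d k) K" using S split by linarith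
  have tm: "(1/2::real) ^ d k * \<tau> powr e \<le> (1/3) ^ d k" if k: "k \<in> K" for k
  proof -
    have "\<tau> powr e \<le> ((1/2::real) ^ d k) powr e"
      using k tpos e0 by (intro powr_mono2) (auto simp: K_def)
    also have "\<dots> = (2/3) ^ d k" unfolding e_def by (rule pow_id)
    finally have "(1/2::real) ^ d k * \<tau> powr e \<le> (1/2) ^ d k * (2/3) ^ d k"
      by (simp add: mult_left_mono)
    also have "\<dots> = (1/3) ^ d k" by (simp add: power_mult_distrib[symmetric])
    finally show ?thesis .
  qed
  have "\<tau> powr e * (B / 2) \<le> \<tau> powr e * sum (\<lambda>k. (1/2::real) ^ d k) K"
    by (rule mult_left_mono[OF sK]) simp
  also have "\<dots> = sum (\<lambda>k. (1/2::real) ^ d k * \<tau> powr e) K" by (simp add: sum_distrib_left mult.commute)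
  also have "\<dots> \<le> sum (\<lambda>k. (1/3::real) ^ d k) K" by (rule sum_mono) (rule tm)
  also have "\<dots> \<le> (\<Sum>k<n. (1/3::real) ^ d k)" unfolding K_def by (intro sum_mono2) auto
  finally have main: "\<tau> powr e * (B / 2) \<le> (\<Sum>k<n. (1/3::real) ^ d k)" .
  have two: "(2::real) powr e = 3 / 2" unfolding e_def by (simp add: powr_diff)
  have Be: "B powr e \<ge> 1" using B e0 by (simp add: ge_one_powr_ge_zero)
  have npos: "real n > 0" using n by simp
  have teq: "\<tau> powr e = B powr e / ((3/2) * real n powr e)"
    unfolding \<tau>_def using B npos by (simp add: powr_divide powr_mult two)
  have "real n powr (1 - log 2 3) = 1 / real n powr e" unfolding e_def
    using npos by (simp add: powr_minus_divide[symmetric])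
  then have "B * real n powr (1 - log 2 3) / 3 = (2/3) * (1 / real n powr e) * (B / 2)" by simp
  also have "\<dots> \<le> \<tau> powr e * (B / 2)"
  proof -
    have "(2/3) * (1 / real n powr e) \<le> B powr e / ((3/2) * real n powr e)"
      using Be npos by (simp add: divide_right_mono field_simps)
    then show ?thesis unfolding teq using B by (intro mult_right_mono) auto
  qed
  finally show ?thesis using main by linarith
qed


theorem lemma17:
  "\<exists>c > 0. \<exists>N. \<forall>ps S. run ps S \<longrightarrow> (\<forall>P \<in> set ps. piece_ok P) \<longrightarrow>
      no_near_empty S \<longrightarrow> length ps \<ge> N \<longrightarrow>
      density S \<ge> c * real (length ps) powr (1 - log 2 3)"
proof (intro exI[of _ "1/18"] conjI)
  show "(0::real) < 1/18" by simp
  show "\<exists>N. \<forall>ps S. run ps S \<longrightarrow> (\<forall>P \<in> set ps. piece_ok P) \<longrightarrow>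
      no_near_empty S \<longrightarrow> length ps \<ge> N \<longrightarrow>
      density S \<ge> 1/18 * real (length ps) powr (1 - log 2 3)"
  proof (intro exI[of _ 1] allI impI)
    fix ps S
    assume r: "run ps S" and ok: "\<forall>P\<in>set ps. piece_ok P" and ne: "no_near_empty S"
      and n1: "1 \<le> length ps"
    have I: "binv S" "pinv S" "linv S" "map (\<lambda>(w, s, x, k). (w, s)) (pcs S) = ps"
      using run_inv[OF r] by auto
    define n where "n = length (pcs S)"
    have nlen: "length ps = n" unfolding n_def using I(4) by (metis length_map)
    define B where "B = real (nb S)"
    define d where "d k = length (bt S (snd (snd (snd (pcs S ! k)))))" for k
    have S2: "B \<le> (\<Sum>k<n. (1/2::real) ^ d k)"
      using piece_sum[OF I(1) ne I(3)] unfolding B_def d_def n_def .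
    have pk: "0 < fst P \<and> 0 < fst (snd (snd P)) + fst P + max 0 (fst (snd P)) \<and>
       fst (snd (snd P)) + fst P + max 0 (fst (snd P)) \<le> 2 * B \<and>
       (1/3::real) ^ length (bt S (snd (snd (snd P)))) / 3 \<le> fst P \<and>
       snd (snd (snd P)) < length (bxs S)" if P: "P \<in> set (pcs S)" for P
    proof -
      obtain w s x kk where Pe: "P = (w, s, x, kk)" by (cases P) auto
      have "(w, s) \<in> set ps" using P Pe I(4) by force
      then have w: "0 < w" using ok unfolding piece_ok_def by auto
      have h: "kk < length (bxs S)" "para x w s \<subseteq> bset S kk" "tlen (bt S kk) \<le> 6 * w"
        using I(2) P Pe unfolding pinv_def by auto
      have bd: "bset S kk \<subseteq> {(u,y). 0 \<le> u \<and> u \<le> 2 * B}"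
        using I(1) h(1) unfolding binv_def B_def by blast
      have pts: "(x, 0) \<in> para x w s" "(x + w, 0) \<in> para x w s" "(x + s + w, 1) \<in> para x w s"
        using w by (auto simp: para_def)
      have "0 \<le> x" "x + w \<le> 2 * B" "x + s + w \<le> 2 * B"
        using pts h(2) bd by auto
      moreover have "(1/3::real) ^ length (bt S kk) / 3 \<le> w" using h(3) by (simp add: tlen_eq)
      ultimately show ?thesis using Pe w h(1) by (auto simp: max_def)
    qed
    have npos: "n \<ge> 1" using n1 nlen by simp
    have B1: "B \<ge> 1"
    proof -
      have "pcs S ! 0 \<in> set (pcs S)" using npos unfolding n_def by (intro nth_mem) linarith
      then have "snd (snd (snd (pcs S ! 0))) < length (bxs S)" using pk by blast
      then have M: "0 < length (bxs S)" by linarith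
      have "bpar S 0 = None"
      proof (cases "bpar S 0")
        case (Some i)
        then show ?thesis using binvD(2)[OF I(1) M Some] by simp
      qed simp
      then have "0 \<in> {j. j < length (bxs S) \<and> bpar S j = None}" using M by simp
      moreover have "finite {j. j < length (bxs S) \<and> bpar S j = None}" by simp
      ultimately have "card {j. j < length (bxs S) \<and> bpar S j = None} > 0"
        using card_gt_0_iff by blast
      then have "card {j. j < length (bxs S) \<and> bpar S j = None} \<ge> 1" by linarith
      then show ?thesis unfolding B_def nb_card by simp
    qed
    have M3: "B * real n powr (1 - log 2 3) / 3 \<le> (\<Sum>k<n. (1/3::real) ^ d k)"
      by (rule markov[OF npos B1 S2])
    have area: "piece_area S = (\<Sum>k<n. fst (pcs S ! k))"
      unfolding piece_area_def n_def by (simp add: sum_list_sum_nth atLeast0LessThan)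
    have "(\<Sum>k<n. (1/3::real) ^ d k / 3) \<le> (\<Sum>k<n. fst (pcs S ! k))"
    proof (rule sum_mono)
      fix k assume "k \<in> {..<n}"
      then have "pcs S ! k \<in> set (pcs S)" unfolding n_def by simp
      then show "(1/3::real) ^ d k / 3 \<le> fst (pcs S ! k)" using pk unfolding d_def by blast
    qed
    then have A: "B * real n powr (1 - log 2 3) / 9 \<le> piece_area S"
      using M3 area by (simp add: sum_divide_distrib[symmetric])
    define h where "h = (\<lambda>(w::real, s::real, x::real, i::nat). x + w + max 0 s)"
    have hP: "h P = fst (snd (snd P)) + fst P + max 0 (fst (snd P))" for P
      unfolding h_def by (cases P) auto
    have L: "occupied_length S = Max (set (map h (pcs S)))" unfolding occupied_length_def h_def ..
    have ne2: "set (map h (pcs S)) \<noteq> {}" using npos unfolding n_def by auto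
    have all: "\<forall>a\<in>set (map h (pcs S)). a \<le> 2 * B"
    proof
      fix a assume "a \<in> set (map h (pcs S))"
      then obtain P where P: "P \<in> set (pcs S)" "a = h P" by auto
      show "a \<le> 2 * B" using pk[OF P(1)] unfolding P(2) hP by linarith
    qed
    have Lle: "occupied_length S \<le> 2 * B"
      unfolding L using ne2 all by (simp add: Max_le_iff)
    have Lpos: "occupied_length S > 0"
    proof -
      have "pcs S ! 0 \<in> set (pcs S)" using npos unfolding n_def by (intro nth_mem) linarith
      then have i: "h (pcs S ! 0) \<in> set (map h (pcs S))" by simp
      have "h (pcs S ! 0) > 0" using pk[OF \<open>pcs S ! 0 \<in> set (pcs S)\<close>] unfolding hP by linarith
      moreover have "h (pcs S ! 0) \<le> Max (set (map h (pcs S)))" using i by (intro Max_ge) simp_all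
      ultimately show ?thesis unfolding L by linarith
    qed
    have "0 \<le> B * real n powr (1 - log 2 3) / 9" using B1 by simp
    then have Apos: "0 \<le> piece_area S" using A by linarith
    have "1/18 * real n powr (1 - log 2 3) = (B * real n powr (1 - log 2 3) / 9) / (2 * B)"
      using B1 by (simp add: field_simps)
    also have "\<dots> \<le> piece_area S / (2 * B)"
      using B1 by (intro divide_right_mono[OF A]) simp
    also have "\<dots> \<le> piece_area S / occupied_length S"
      using Apos Lpos Lle by (simp add: divide_left_mono)
    finally show "1/18 * real (length ps) powr (1 - log 2 3) \<le> density S"
      unfolding density_def nlen .
  qed
qed


end
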